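(* Let $m\in\mathbb N$, let $M_1,M_2\in{\rm Mat}_m(\mathbb Z)$, and let $S\in{\rm Mat}_m(\mathbb Z)\cap GL_m(\mathbb Q)$ satisfy $M_2=S^{-1}M_1S$. Then for every $n\in\mathbb N$ with $\gcd(n,\det(S))=1$, the move graphs $\Gamma_{M_1,\,n}$ and $\Gamma_{M_2,\,n}$ are isomorphic.
   Context: $\mathbb N$ is the set of positive integers and $\mathbb Z_n$ the integers modulo $n$. $GL_m(\mathbb Q)$ denotes the invertible $m\times m$ rational matrices. For $M\in{\rm Mat}_m(\mathbb Z)$, the move graph $\Gamma_{M,\,n}$ is the directed graph with vertex set $\mathbb Z_n^m$ and arc set $\{({\bf x},{\bf y}) : {\bf y}^T=M{\bf x}^T \text{ in } \mathbb Z_n^m\}$ (loops allowed). *)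

theory Defs
  imports "HOL-Analysis.Analysis"
begin

text \<open>Vertices of the move graph: Z_n^m, represented by integer vectors with
  entries in the canonical residue range 0..n-1.\<close>
definition move_vertices :: "nat \<Rightarrow> (int ^ 'm) set" where
  "move_vertices n = {x. \<forall>i. 0 \<le> x $ i \<and> x $ i < int n}"

definition move_arcs :: "int ^ 'm ^ 'm \<Rightarrow> nat \<Rightarrow> ((int ^ 'm) \<times> (int ^ 'm)) set" where
  "move_arcs M n = {(x, y). x \<in> move_vertices n \<and> y \<in> move_vertices n \<and>
                          (\<forall>i. y $ i = ((M *v x) $ i) mod int n)}"

definition move_graph :: "int ^ 'm ^ 'm \<Rightarrow> nat \<Rightarrow> (int ^ 'm) set \<times> ((int ^ 'm) \<times> (int ^ 'm)) set" where
  "move_graph M n = (move_vertices n, move_arcs M n)"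

definition digraph_iso :: "'a set \<times> ('a \<times> 'a) set \<Rightarrow> 'b set \<times> ('b \<times> 'b) set \<Rightarrow> bool" where
  "digraph_iso G H \<longleftrightarrow> (\<exists>f. bij_betw f (fst G) (fst H) \<and>
      (\<forall>x\<in>fst G. \<forall>y\<in>fst G. (x, y) \<in> snd G \<longleftrightarrow> (f x, f y) \<in> snd H))"

definition rat_mat :: "int ^ 'n ^ 'm \<Rightarrow> rat ^ 'n ^ 'm" where
  "rat_mat A = (\<chi> i j. of_int (A $ i $ j))"

end

theory Submission
  imports Defs
begin

lemma rat_mat_inj: "rat_mat A = rat_mat B \<Longrightarrow> A = B"
  unfolding rat_mat_def by (simp add: vec_eq_iff)

lemma rat_mat_mult: "rat_mat (A ** B) = rat_mat A ** rat_mat B"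
  unfolding rat_mat_def matrix_matrix_mult_def by (simp add: vec_eq_iff)

lemma det_rat_mat: "det (rat_mat A) = of_int (det A)"
  unfolding det_def rat_mat_def by simp

lemma matrix_inv_right:
  assumes "invertible (A::'a::semiring_1^'n^'n)"
  shows "A ** matrix_inv A = mat 1"
  using assms unfolding invertible_def matrix_inv_def by (rule someI2_ex) auto

lemma cramer_int:
  fixes S :: "int^'n^'n"
  shows "det (\<chi> i j. if j = k then (S *v x)$i else S$i$j) = x$k * det S"
proof -
  let ?x = "(\<chi> i. (of_int (x$i) :: rat))"
  have "rat_mat (\<chi> i j. if j = k then (S *v x)$i else S$i$j)
      = (\<chi> i j. if j = k then (rat_mat S *v ?x)$i else rat_mat S$i$j)"
    unfolding rat_mat_def matrix_vector_mult_def by (simp add: vec_eq_iff)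
  then have "of_int (det (\<chi> i j. if j = k then (S *v x)$i else S$i$j))
      = det (\<chi> i j. if j = k then (rat_mat S *v ?x)$i else rat_mat S$i$j)"
    by (simp only: det_rat_mat[symmetric])
  also have "\<dots> = ?x$k * det (rat_mat S)"
    by (rule cramer_lemma)
  finally have "of_int (det (\<chi> i j. if j = k then (S *v x)$i else S$i$j))
      = (of_int (x$k * det S) :: rat)"
    by (simp add: det_rat_mat)
  then show ?thesis by (simp only: of_int_eq_iff)
qed

lemma det_mod_cong:
  fixes A B :: "int^'n^'n"
  assumes "\<And>i j. A$i$j mod m = B$i$j mod m"
  shows "det A mod m = det B mod m"
proof -
  have p: "\<And>p. prod (\<lambda>i. A$i$p i) UNIV mod m = prod (\<lambda>i. B$i$p i) UNIV mod m"
    by (metis (no_types, lifting) assms mod_prod_eq prod.cong)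
  have "det A mod m = (\<Sum>p\<in>{p. p permutes UNIV}. (of_int (sign p) * prod (\<lambda>i. A$i$p i) UNIV) mod m) mod m"
    unfolding det_def by (simp add: mod_sum_eq)
  also have "\<dots> = (\<Sum>p\<in>{p. p permutes UNIV}. (of_int (sign p) * prod (\<lambda>i. B$i$p i) UNIV) mod m) mod m"
    by (metis (no_types, lifting) p mod_mult_right_eq sum.cong)
  also have "\<dots> = det B mod m"
    unfolding det_def by (simp add: mod_sum_eq)
  finally show ?thesis .
qed

lemma mv_mod_cong:
  fixes A :: "int^'n^'k"
  assumes "\<And>i. a$i mod m = b$i mod m"
  shows "(A *v a)$i mod m = (A *v b)$i mod m"
proof -
  have "(A *v a)$i mod m = (\<Sum>j\<in>UNIV. (A$i$j * a$j) mod m) mod m"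
    unfolding matrix_vector_mult_def by (simp add: mod_sum_eq)
  also have "\<dots> = (\<Sum>j\<in>UNIV. (A$i$j * b$j) mod m) mod m"
    by (metis (no_types, lifting) assms mod_mult_right_eq sum.cong)
  also have "\<dots> = (A *v b)$i mod m"
    unfolding matrix_vector_mult_def by (simp add: mod_sum_eq)
  finally show ?thesis .
qed

lemma cancel_S:
  fixes S :: "int^'n^'n"
  assumes cop: "coprime m (det S)"
    and h: "\<And>i. (S *v a)$i mod m = (S *v b)$i mod m"
  shows "a$k mod m = b$k mod m"
proof -
  have "det (\<chi> i j. if j = k then (S *v a)$i else S$i$j) mod m
      = det (\<chi> i j. if j = k then (S *v b)$i else S$i$j) mod m"
    by (rule det_mod_cong) (simp add: h)
  then have "(a$k * det S) mod m = (b$k * det S) mod m"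
    by (simp add: cramer_int)
  then have "m dvd (a$k - b$k) * det S"
    by (metis mod_eq_dvd_iff left_diff_distrib)
  then have "m dvd (a$k - b$k)"
    using cop coprime_dvd_mult_left_iff by blast
  then show ?thesis by (simp add: mod_eq_dvd_iff)
qed

lemma digraph_iso_sym:
  assumes "digraph_iso G H" shows "digraph_iso H G"
proof -
  obtain g where b: "bij_betw g (fst G) (fst H)"
    and a: "\<forall>x\<in>fst G. \<forall>y\<in>fst G. (x, y) \<in> snd G \<longleftrightarrow> (g x, g y) \<in> snd H"
    using assms unfolding digraph_iso_def by blast
  let ?f = "inv_into (fst G) g"
  have b': "bij_betw ?f (fst H) (fst G)" using b by (rule bij_betw_inv_into)
  have "\<forall>x\<in>fst H. \<forall>y\<in>fst H. (x, y) \<in> snd H \<longleftrightarrow> (?f x, ?f y) \<in> snd G"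
  proof (intro ballI)
    fix x y assume x: "x \<in> fst H" and y: "y \<in> fst H"
    have fx: "?f x \<in> fst G" "g (?f x) = x"
      using b x by (auto intro: bij_betw_apply[OF b'] simp: bij_betw_inv_into_right)
    have fy: "?f y \<in> fst G" "g (?f y) = y"
      using b y by (auto intro: bij_betw_apply[OF b'] simp: bij_betw_inv_into_right)
    show "(x, y) \<in> snd H \<longleftrightarrow> (?f x, ?f y) \<in> snd G"
      using a fx fy by metis
  qed
  with b' show ?thesis unfolding digraph_iso_def by blast
qed

lemma finite_move_vertices: "finite (move_vertices n :: (int^'m) set)"
proof -
  have "move_vertices n \<subseteq> vec_lambda ` (PiE UNIV (\<lambda>_::'m. {0..<int n}))"
  proof
    fix x :: "int^'m" assume "x \<in> move_vertices n"
    then have "(\<lambda>i. x$i) \<in> PiE UNIV (\<lambda>_::'m. {0..<int n})"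
      unfolding move_vertices_def by auto
    then show "x \<in> vec_lambda ` (PiE UNIV (\<lambda>_::'m. {0..<int n}))"
      by (metis image_eqI vec_lambda_eta)
  qed
  then show ?thesis by (rule finite_subset) (simp add: finite_PiE)
qed

theorem theorem3p5:
  fixes M1 M2 S :: "int ^ 'm ^ 'm" and n :: nat
  assumes "invertible (rat_mat S)"
    and "rat_mat M2 = matrix_inv (rat_mat S) ** rat_mat M1 ** rat_mat S"
    and "n > 0"
    and "gcd (int n) (det S) = 1"
  shows "digraph_iso (move_graph M1 n) (move_graph M2 n)"
proof -
  let ?V = "move_vertices n :: (int^'m) set"
  have cop: "coprime (int n) (det S)" using assms(4) by (simp add: coprime_iff_gcd_eq_1)
  have "rat_mat (S ** M2) = rat_mat (M1 ** S)"
    using assms(2) matrix_inv_right[OF assms(1)]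
    by (simp add: rat_mat_mult matrix_mul_assoc)
  then have comm: "S ** M2 = M1 ** S" by (rule rat_mat_inj)
  have np: "int n > 0" using assms(3) by simp
  have canon: "\<And>x i. x \<in> ?V \<Longrightarrow> x$i mod int n = x$i"
    unfolding move_vertices_def by simp
  define g where "g u = (\<chi> i. (S *v u)$i mod int n)" for u :: "int^'m"
  have gV: "g u \<in> ?V" for u
    unfolding g_def move_vertices_def using np by simp
  have gi: "(g u)$i mod int n = (S *v u)$i mod int n" for u i
    unfolding g_def by simp
  have inj: "inj_on g ?V"
  proof
    fix u v assume u: "u \<in> ?V" and v: "v \<in> ?V" and e: "g u = g v"
    have "\<And>i. (S *v u)$i mod int n = (S *v v)$i mod int n"
      using e gi by metis
    then have "\<And>k. u$k mod int n = v$k mod int n"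
      using cancel_S[OF cop] by blast
    then show "u = v" using canon u v by (metis vec_eq_iff)
  qed
  have "g ` ?V = ?V" using finite_move_vertices gV inj by (intro endo_inj_surj) auto
  with inj have bij: "bij_betw g ?V ?V" unfolding bij_betw_def by blast
  have arcs: "(u, v) \<in> move_arcs M2 n \<longleftrightarrow> (g u, g v) \<in> move_arcs M1 n"
    if u: "u \<in> ?V" and v: "v \<in> ?V" for u v
  proof -
    have "(u, v) \<in> move_arcs M2 n \<longleftrightarrow> (\<forall>i. v$i mod int n = (M2 *v u)$i mod int n)"
      unfolding move_arcs_def using u v canon by auto
    also have "\<dots> \<longleftrightarrow> (\<forall>i. (S *v v)$i mod int n = (S *v (M2 *v u))$i mod int n)"
    proof
      assume "\<forall>i. v$i mod int n = (M2 *v u)$i mod int n"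
      then show "\<forall>i. (S *v v)$i mod int n = (S *v (M2 *v u))$i mod int n"
        using mv_mod_cong[of v "int n" "M2 *v u" S] by blast
    next
      assume "\<forall>i. (S *v v)$i mod int n = (S *v (M2 *v u))$i mod int n"
      then show "\<forall>i. v$i mod int n = (M2 *v u)$i mod int n"
        using cancel_S[OF cop, of v "M2 *v u"] by blast
    qed
    also have "\<dots> \<longleftrightarrow> (\<forall>i. (g v)$i mod int n = (M1 *v g u)$i mod int n)"
    proof -
      have "S *v (M2 *v u) = M1 *v (S *v u)" by (simp add: matrix_vector_mul_assoc comm)
      moreover have "\<And>i. (M1 *v (S *v u))$i mod int n = (M1 *v g u)$i mod int n"
        by (rule mv_mod_cong) (simp add: gi)
      ultimately show ?thesis by (simp add: gi)
    qed
    also have "\<dots> \<longleftrightarrow> (g u, g v) \<in> move_arcs M1 n"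
      unfolding move_arcs_def using gV canon by auto
    finally show ?thesis .
  qed
  have "digraph_iso (move_graph M2 n) (move_graph M1 n)"
    unfolding digraph_iso_def move_graph_def using bij arcs by auto
  then show ?thesis by (rule digraph_iso_sym)
qed

end
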